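(* Let $S(A)=(a_n)$ be an independent Stanley sequence with character $\lambda$. Let $\ell$ be the minimum adequate integer for $S(A)$, and let $k\ge \ell$. Let $c$ be an integer with $$\lambda\le c\le a_{2^k-2^\ell}-\lambda.$$ Then the set $$A_k(c,A)=\{a_i\mid 0\le i<2^k\}\cup\{c+a_i\mid 2^k\le i<2^{k+1}\}$$ is 3-free, and the Stanley sequence $S_k(c,A)=S(A_k(c,A))$ is a regular Stanley sequence with core $S(A)$.
   Context: A set of non-negative integers is 3-free if no three of its elements form an arithmetic progression. For a finite 3-free set $A=\{a_0<\cdots<a_k\}$ of non-negative integers, the Stanley sequence $S(A)=(a_n)_{n\ge0}$ is the increasing sequence with initial terms $a_0,\ldots,a_k$ in which each subsequent $a_{n+1}$ is the smallest integer greater than $a_n$ such that $\{a_0,\ldots,a_{n+1}\}$ is 3-free. Throughout, Stanley sequences are in root position ($a_0=0$). A finite set $A'$ with $S(A')=S(A)$ is a nucleating set; a minimal nucleating set is one of minimal cardinality. A Stanley sequence $(a_n)$ is independent with character $\lambda$ if for all sufficiently large $k$: $a_{2^k+i}=a_{2^k}+a_i$ for $0\le i<2^k$, and $a_{2^k}=2a_{2^k-1}-\lambda+1$. An integer $k_0$ is adequate for an independent $S(A)$ if (i) these equations hold for all $k\ge k_0$ and (ii) $a_{2^{k_0}}$ is not contained in the minimal nucleating set of $S(A)$. A Stanley sequence $(b_n)$ is regular with core $(a'_n)$ if there exist constants $\lambda,\sigma$ and an independent Stanley sequence $(a'_n)$ of character $\lambda$ such that for all large $k$ and $0\le i<2^k$: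 $b_{2^k-\sigma+i}=b_{2^k-\sigma}+a'_i$ and $b_{2^k-\sigma}=2b_{2^k-\sigma-1}-\lambda+1$ (such data are unique). *)

theory Defs
  imports Main
begin

definition three_free :: "nat set \<Rightarrow> bool" where
  "three_free S \<longleftrightarrow>
     (\<forall>x\<in>S. \<forall>y\<in>S. \<forall>z\<in>S. x < y \<longrightarrow> y < z \<longrightarrow> x + z \<noteq> 2 * y)"

primrec stanley_list :: "nat set \<Rightarrow> nat \<Rightarrow> nat list" where
  "stanley_list A 0 = []"
| "stanley_list A (Suc n) =
     (let xs = stanley_list A n in
      if n < card A then xs @ [sorted_list_of_set A ! n]
      else xs @ [LEAST x. last xs < x \<and> three_free (insert x (set xs))])"

definition stanley :: "nat set \<Rightarrow> nat \<Rightarrow> nat" where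
  "stanley A n = stanley_list A (Suc n) ! n"

definition stanley_init :: "nat set \<Rightarrow> bool" where
  "stanley_init A \<longleftrightarrow> finite A \<and> three_free A \<and> 0 \<in> A"

definition nucleating_set :: "nat set \<Rightarrow> nat set \<Rightarrow> bool" where
  "nucleating_set A B \<longleftrightarrow> stanley_init B \<and> stanley B = stanley A"

definition minimal_nucleating_set :: "nat set \<Rightarrow> nat set \<Rightarrow> bool" where
  "minimal_nucleating_set A B \<longleftrightarrow> nucleating_set A B \<and>
     (\<forall>B'. nucleating_set A B' \<longrightarrow> card B \<le> card B')"

definition indep_eqs :: "(nat \<Rightarrow> nat) \<Rightarrow> int \<Rightarrow> nat \<Rightarrow> bool" where
  "indep_eqs a lam k \<longleftrightarrow>
     (\<forall>i < 2^k. a (2^k + i) = a (2^k) + a i) \<and>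
     int (a (2^k)) = 2 * int (a (2^k - 1)) - lam + 1"

definition independent :: "(nat \<Rightarrow> nat) \<Rightarrow> int \<Rightarrow> bool" where
  "independent a lam \<longleftrightarrow> (\<exists>K. \<forall>k\<ge>K. indep_eqs a lam k)"

definition adequate :: "nat set \<Rightarrow> int \<Rightarrow> nat \<Rightarrow> bool" where
  "adequate A lam k0 \<longleftrightarrow>
     (\<forall>k\<ge>k0. indep_eqs (stanley A) lam k) \<and>
     (\<forall>M. minimal_nucleating_set A M \<longrightarrow> stanley A (2^k0) \<notin> M)"

definition regular_with_core :: "(nat \<Rightarrow> nat) \<Rightarrow> (nat \<Rightarrow> nat) \<Rightarrow> bool" where
  "regular_with_core b a \<longleftrightarrow>
     (\<exists>lam::int. \<exists>\<sigma>::int. independent a lam \<and>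
        (\<exists>K. \<forall>k\<ge>K. \<forall>i < 2^k.
           b (nat (2^k - \<sigma>) + i) = b (nat (2^k - \<sigma>)) + a i \<and>
           int (b (nat (2^k - \<sigma>))) = 2 * int (b (nat (2^k - \<sigma> - 1))) - lam + 1))"

definition Ak_set :: "nat set \<Rightarrow> nat \<Rightarrow> int \<Rightarrow> nat set" where
  "Ak_set A k c = {stanley A i | i. i < 2^k} \<union>
                  {nat (c + int (stanley A i)) | i. 2^k \<le> i \<and> i < 2^(k+1)}"

end

theory Submission
  imports Defs
begin

lemma three_free_subset: "three_free S \<Longrightarrow> T \<subseteq> S \<Longrightarrow> three_free T"
  unfolding three_free_def by blast

lemma stanley_list_Suc: "stanley_list A (Suc n) = stanley_list A n @
   [if n < card A then sorted_list_of_set A ! n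
    else (LEAST x. last (stanley_list A n) < x \<and> three_free (insert x (set (stanley_list A n))))]"
  by (simp add: Let_def)

declare stanley_list.simps(2)[simp del]

lemma stanley_list_length[simp]: "length (stanley_list A n) = n"
  by (induction n) (simp_all add: stanley_list_Suc)

lemma stanley_list_Suc_snoc: "\<exists>x. stanley_list A (Suc n) = stanley_list A n @ [x]"
  by (simp add: stanley_list_Suc)

lemma stanley_list_take: "m \<le> n \<Longrightarrow> take m (stanley_list A n) = stanley_list A m"
proof (induction n)
  case 0 then show ?case by simp
next
  case (Suc n)
  show ?case
  proof (cases "m \<le> n")
    case True
    obtain x where "stanley_list A (Suc n) = stanley_list A n @ [x]"
      using stanley_list_Suc_snoc by blast
    then show ?thesis using True Suc by simp
  next
    case False then have "m = Suc n" using Suc by simp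
    then show ?thesis by simp
  qed
qed

lemma stanley_list_nth: "n < m \<Longrightarrow> stanley_list A m ! n = stanley A n"
proof -
  assume "n < m"
  then have "stanley A n = take (Suc n) (stanley_list A m) ! n"
    by (simp add: stanley_def stanley_list_take)
  then show ?thesis by simp
qed

lemma stanley_list_map: "stanley_list A m = map (stanley A) [0..<m]"
  by (rule nth_equalityI) (simp_all add: stanley_list_nth)

lemma stanley_small: "n < card A \<Longrightarrow> stanley A n = sorted_list_of_set A ! n"
  by (simp add: stanley_def stanley_list_Suc nth_append)

lemma stanley_large: "card A \<le> n \<Longrightarrow> 0 < n \<Longrightarrow>
   stanley A n = (LEAST x. stanley A (n - 1) < x \<and> three_free (insert x (stanley A ` {..<n})))"
proof -
  assume "card A \<le> n" "0 < n"
  have l: "last (stanley_list A n) = stanley A (n-1)"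
    using \<open>0 < n\<close> by (simp add: stanley_list_map last_map)
  have s: "set (stanley_list A n) = stanley A ` {..<n}"
    by (auto simp: stanley_list_map)
  show ?thesis using \<open>card A \<le> n\<close>
    by (simp add: stanley_def stanley_list_Suc nth_append l s)
qed

lemma three_free_insert_big:
  assumes "three_free S" "\<forall>s\<in>S. s < x"
    and "\<forall>p\<in>S. \<forall>q\<in>S. p < q \<longrightarrow> p + x \<noteq> 2 * q"
  shows "three_free (insert x S)"
  using assms unfolding three_free_def
  by (metis insert_iff less_asym)

lemma three_free_insert_bigD:
  assumes "three_free (insert x S)" "p \<in> S" "q \<in> S" "p < q" "q < x"
  shows "p + x \<noteq> 2 * q"
  using assms unfolding three_free_def by blast

lemma stanley_list_inv:
  assumes "finite A" "three_free A" "A \<noteq> {}"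
  shows "sorted_wrt (<) (stanley_list A n) \<and> three_free (set (stanley_list A n))"
proof (induction n)
  case 0 then show ?case by (simp add: three_free_def)
next
  case (Suc n)
  let ?xs = "stanley_list A n"
  let ?L = "sorted_list_of_set A"
  show ?case
  proof (cases "n < card A")
    case True
    have "stanley_list A (Suc n) = take (Suc n) ?L"
    proof (rule nth_equalityI)
      show "length (stanley_list A (Suc n)) = length (take (Suc n) ?L)"
        using True by simp
      fix i assume "i < length (stanley_list A (Suc n))"
      then have "i < Suc n" by simp
      then show "stanley_list A (Suc n) ! i = take (Suc n) ?L ! i"
        using True by (simp add: stanley_list_nth stanley_small)
    qed
    moreover have "sorted_wrt (<) (take (Suc n) ?L)"
      by (metis sorted_list_of_set.strict_sorted_key_list_of_set sorted_wrt_take)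
    moreover have "set (take (Suc n) ?L) \<subseteq> A"
      using assms(1) by (metis set_take_subset sorted_list_of_set.set_sorted_key_list_of_set)
    ultimately show ?thesis using assms(2) three_free_subset by metis
  next
    case False
    have cA: "0 < card A" using assms by (simp add: card_gt_0_iff)
    then have n0: "0 < n" using False by simp
    define l where "l = last ?xs"
    have xsne: "?xs \<noteq> []" using n0 by (metis length_0_conv stanley_list_length not_less0)
    have le: "\<forall>s\<in>set ?xs. s \<le> l"
    proof
      fix s assume "s \<in> set ?xs"
      then obtain i where i: "i < length ?xs" "?xs ! i = s" by (metis in_set_conv_nth)
      have "l = ?xs ! (length ?xs - 1)" using xsne l_def by (simp add: last_conv_nth)
      then show "s \<le> l" using i Suc.IH
        by (metis Suc_pred' diff_Suc_less length_greater_0_conv less_Suc_eq order_less_imp_le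
            order.refl sorted_wrt_nth_less xsne)
    qed
    define P where "P x \<longleftrightarrow> l < x \<and> three_free (insert x (set ?xs))" for x
    have "P (2 * l + 1)"
      unfolding P_def
    proof
      show "l < 2*l+1" by simp
      show "three_free (insert (2 * l + 1) (set ?xs))"
      proof (rule three_free_insert_big)
        show "three_free (set ?xs)" using Suc.IH by simp
        show "\<forall>s\<in>set ?xs. s < 2 * l + 1" using le by fastforce
        show "\<forall>p\<in>set ?xs. \<forall>q\<in>set ?xs. p < q \<longrightarrow> p + (2 * l + 1) \<noteq> 2 * q"
          using le by fastforce
      qed
    qed
    then have PL: "P (LEAST x. P x)" by (rule LeastI)
    have eq: "stanley_list A (Suc n) = ?xs @ [LEAST x. P x]"
      using False by (simp add: stanley_list_Suc P_def l_def)
    have "sorted_wrt (<) (?xs @ [LEAST x. P x])"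
      using Suc.IH PL le unfolding P_def
      by (auto simp: sorted_wrt_append)
    moreover have "three_free (set (?xs @ [LEAST x. P x]))"
      using PL unfolding P_def by simp
    ultimately show ?thesis using eq by simp
  qed
qed

locale stinit =
  fixes A :: "nat set"
  assumes fin: "finite A" and tf: "three_free A" and ne: "A \<noteq> {}"
begin

lemma strict_mono_stanley: "strict_mono (stanley A)"
unfolding strict_mono_Suc_iff
proof
  fix n
  have "sorted_wrt (<) (stanley_list A (Suc (Suc n)))"
    using stanley_list_inv[OF fin tf ne] by blast
  then have "stanley_list A (Suc (Suc n)) ! n < stanley_list A (Suc (Suc n)) ! Suc n"
    by (simp add: sorted_wrt_iff_nth_less)
  then show "stanley A n < stanley A (Suc n)" by (simp add: stanley_list_nth)
qed

lemma three_free_range: "three_free (range (stanley A))"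
  unfolding three_free_def
proof (intro ballI impI)
  fix x y z assume "x \<in> range (stanley A)" "y \<in> range (stanley A)" "z \<in> range (stanley A)"
    "x < y" "y < z"
  then obtain i j m where ijm: "x = stanley A i" "y = stanley A j" "z = stanley A m" by blast
  let ?n = "Suc (i + j + m)"
  have e: "set (stanley_list A ?n) = stanley A ` {..<?n}" by (simp add: stanley_list_map atLeast0LessThan del: upt_Suc)
  have tfs: "three_free (stanley A ` {..<?n})" using stanley_list_inv[OF fin tf ne, of ?n] unfolding e by blast
  have "x \<in> stanley A ` {..<?n}" "y \<in> stanley A ` {..<?n}"
    "z \<in> stanley A ` {..<?n}" using ijm by auto
  then show "x + z \<noteq> 2 * y" using tfs \<open>x<y\<close> \<open>y<z\<close> unfolding three_free_def by blast
qed

lemma greedy: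
  assumes "stanley A (card A - 1) < x" "x \<notin> range (stanley A)"
  shows "\<exists>p q. p \<in> range (stanley A) \<and> q \<in> range (stanley A) \<and> p < q \<and> q < x \<and> p + x = 2 * q"
proof -
  let ?a = "stanley A"
  have sm: "strict_mono ?a" by (rule strict_mono_stanley)
  have "Suc x \<le> ?a (Suc x)" by (rule strict_mono_imp_increasing[OF sm])
  then have ex: "\<exists>m. x < ?a m" by (intro exI[of _ "Suc x"]) simp
  define m where "m = (LEAST m. x < ?a m)"
  have xm: "x < ?a m" unfolding m_def using ex by (metis LeastI)
  have cA: "0 < card A" using fin ne by (simp add: card_gt_0_iff)
  have mge: "card A \<le> m"
  proof (rule ccontr)
    assume "\<not> card A \<le> m"
    then have "?a m \<le> ?a (card A - 1)" using sm by (simp add: strict_mono_less_eq)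
    then show False using xm assms(1) by simp
  qed
  then have m0: "0 < m" using cA by simp
  have "\<not> x < ?a (m - 1)"
  proof
    assume "x < ?a (m - 1)"
    then have "m \<le> m - 1" using Least_le[of "\<lambda>m. x < ?a m" "m-1", folded m_def] by blast
    with m0 show False by simp
  qed
  moreover have "?a (m-1) \<noteq> x" using assms(2) by auto
  ultimately have xl: "?a (m-1) < x" by linarith
  define Q where "Q y \<longleftrightarrow> ?a (m - 1) < y \<and> three_free (insert y (?a ` {..<m}))" for y
  have "?a m = (LEAST y. Q y)"
    using stanley_large[OF mge m0] unfolding Q_def .
  then have "\<not> Q x" using xm not_less_Least[of x Q] by simp
  then have "\<not> (?a (m - 1) < x \<and> three_free (insert x (?a ` {..<m})))"
    unfolding Q_def .
  then have ntf: "\<not> three_free (insert x (?a ` {..<m}))" using xl by blast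
  have tfS: "three_free (?a ` {..<m})" by (rule three_free_subset[OF three_free_range]) auto
  have below: "\<forall>s\<in>?a ` {..<m}. s < x"
  proof
    fix s assume "s \<in> ?a ` {..<m}"
    then obtain i where "i < m" "s = ?a i" by blast
    then have "s \<le> ?a (m-1)" using sm by (simp add: strict_mono_less_eq)
    then show "s < x" using xl by simp
  qed
  have "\<not> (\<forall>p\<in>?a ` {..<m}. \<forall>q\<in>?a ` {..<m}. p < q \<longrightarrow> p + x \<noteq> 2 * q)"
    using three_free_insert_big[OF tfS below] ntf by blast
  then obtain p q where "p \<in> ?a ` {..<m}" "q \<in> ?a ` {..<m}" "p < q" "p + x = 2*q" by blast
  moreover then have "q < x" by simp
  ultimately show ?thesis by blast
qed

lemma stanley_init_seg: "n \<le> card A \<Longrightarrow> stanley A ` {..<n} = set (take n (sorted_list_of_set A))"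
proof -
  assume n: "n \<le> card A"
  have "stanley A ` {..<n} = set (map (stanley A) [0..<n])" by auto
  also have "map (stanley A) [0..<n] = take n (sorted_list_of_set A)"
    by (rule nth_equalityI) (use n in \<open>simp_all add: stanley_small\<close>)
  finally show ?thesis .
qed

lemma stanley_image_card: "stanley A ` {..<card A} = A"
  using stanley_init_seg[of "card A"] fin by simp

end

lemma stanley_char:
  fixes f :: "nat \<Rightarrow> nat"
  assumes fin: "finite I" and cI: "0 < card I"
    and sm: "strict_mono f"
    and init: "\<forall>i<card I. f i = sorted_list_of_set I ! i"
    and tf: "three_free (range f)"
    and cov: "\<forall>x. f (card I - 1) < x \<longrightarrow> x \<notin> range f \<longrightarrow>
        (\<exists>p q. p \<in> range f \<and> q \<in> range f \<and> p < q \<and> q < x \<and> p + x = 2 * q)"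
  shows "stanley I = f"
proof -
  have L: "stanley_list I m = map f [0..<m]" for m
  proof (induction m)
    case 0 then show ?case by simp
  next
    case (Suc m)
    show ?case
    proof (cases "m < card I")
      case True then show ?thesis using Suc init by (simp add: stanley_list_Suc)
    next
      case False
      then have m0: "0 < m" using cI by simp
      have l: "last (map f [0..<m]) = f (m - 1)" using m0 by (simp add: last_map)
      have s: "set (map f [0..<m]) = f ` {..<m}" by (simp add: atLeast0LessThan)
      have "(LEAST x. f (m-1) < x \<and> three_free (insert x (f ` {..<m}))) = f m"
      proof (rule Least_equality)
        show "f (m - 1) < f m \<and> three_free (insert (f m) (f ` {..<m}))"
          using sm m0 tf three_free_subset[of "range f" "insert (f m) (f ` {..<m})"]
          by (auto simp: strict_mono_less)
      next
        fix y assume y: "f (m - 1) < y \<and> three_free (insert y (f ` {..<m}))"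
        show "f m \<le> y"
        proof (rule ccontr)
          assume "\<not> f m \<le> y"
          then have ym: "y < f m" by simp
          have nr: "y \<notin> range f"
          proof
            assume "y \<in> range f" then obtain j where "y = f j" by blast
            then have "m - 1 < j" "j < m" using ym y strict_mono_less[OF sm] by auto
            then show False by simp
          qed
          have "f (card I - 1) \<le> f (m - 1)" using False sm by (simp add: strict_mono_less_eq)
          then have "f (card I - 1) < y" using y by linarith
          from cov[rule_format, OF this nr] obtain p q where
            pq: "p \<in> range f" "q \<in> range f" "p < q" "q < y" "p + y = 2 * q" by blast
          have inS: "z \<in> f ` {..<m}" if "z \<in> range f" "z < y" for z
          proof -
            from that obtain j where j: "z = f j" by blast
            then have "f j < f m" using ym that by simp
            then have "j < m" using strict_mono_less[OF sm] by blast
            then show ?thesis using j by blast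
          qed
          have "p \<in> f ` {..<m}" "q \<in> f ` {..<m}" using pq inS by auto
          then show False using three_free_insert_bigD[of y "f ` {..<m}" p q] y pq by blast
        qed
      qed
      then show ?thesis using Suc False by (simp add: stanley_list_Suc l s atLeast0LessThan)
    qed
  qed
  show ?thesis
  proof
    fix i show "stanley I i = f i" by (simp add: stanley_def L del: upt_Suc)
  qed
qed

locale setting =
  fixes a :: "nat \<Rightarrow> nat" and lam :: int and l k :: nat and c :: int
  assumes sm: "strict_mono a"
    and a0: "a 0 = 0"
    and tfa: "three_free (range a)"
    and G: "\<forall>x. a (2^l - 1) < x \<longrightarrow> x \<notin> range a \<longrightarrow>
       (\<exists>p q. p \<in> range a \<and> q \<in> range a \<and> p < q \<and> q < x \<and> p + x = 2*q)"
    and eqs: "\<forall>K\<ge>l. indep_eqs a lam K"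
    and lk: "l \<le> k" and lc: "lam \<le> c" and cu: "c \<le> int (a (2^k - 2^l)) - lam"
begin

definition N :: "nat \<Rightarrow> int" where "N J = int (a (2^J))"
definition M :: "nat \<Rightarrow> int" where "M J = int (a (2^J - 1))"
definition PP :: "nat \<Rightarrow> int set" where "PP J = (\<lambda>i. int (a i)) ` {..<2^J}"
definition SA :: "int set" where "SA = range (\<lambda>i. int (a i))"
definition R :: "nat \<Rightarrow> int set" where "R J = {2*u - v | u v. u \<in> PP J \<and> v \<in> PP J}"

lemma a_less[simp]: "a i < a j \<longleftrightarrow> i < j" using sm by (simp add: strict_mono_less)
lemma a_le[simp]: "a i \<le> a j \<longleftrightarrow> i \<le> j" using sm by (simp add: strict_mono_less_eq)

lemma noAP: assumes "x \<in> SA" "y \<in> SA" "z \<in> SA" "x + z = 2*y" shows "x = z"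
proof (rule ccontr)
  assume ne: "x \<noteq> z"
  obtain i j m where ijm: "x = int (a i)" "y = int (a j)" "z = int (a m)"
    using assms unfolding SA_def by blast
  have nat: "a i + a m = 2 * a j" using assms(4) ijm by linarith
  show False
  proof (cases "x < z")
    case True
    then have "a i < a j" "a j < a m" using nat ijm by linarith+
    moreover have "a i \<in> range a" "a j \<in> range a" "a m \<in> range a" by auto
    ultimately show False using tfa nat unfolding three_free_def by blast
  next
    case False
    then have "a m < a j" "a j < a i" using nat ijm ne by linarith+
    moreover have "a i \<in> range a" "a j \<in> range a" "a m \<in> range a" by auto
    moreover have "a m + a i = 2 * a j" using nat by simp
    ultimately show False using tfa unfolding three_free_def by blast
  qed
qed

lemma a_shift: "l \<le> J \<Longrightarrow> i < 2^J \<Longrightarrow> a (2^J + i) = a (2^J) + a i"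
  using eqs[rule_format, of J] unfolding indep_eqs_def by simp

lemma NM: "l \<le> J \<Longrightarrow> N J = 2 * M J + 1 - lam"
  using eqs[rule_format, of J] unfolding indep_eqs_def N_def M_def by simp

lemma M_Suc: "l \<le> J \<Longrightarrow> M (Suc J) = N J + M J"
proof -
  assume J: "l \<le> J"
  have "(2::nat)^Suc J - 1 = 2^J + (2^J - 1)" by simp
  then show ?thesis using a_shift[OF J, of "2^J - 1"] unfolding M_def N_def by simp
qed

lemma N_Suc: "l \<le> J \<Longrightarrow> N (Suc J) = 3 * N J"
  using NM[of J] NM[of "Suc J"] M_Suc[of J] by simp

lemma PP_Suc: "l \<le> J \<Longrightarrow> PP (Suc J) = PP J \<union> (+) (N J) ` PP J"
proof -
  assume J: "l \<le> J"
  have "{..<(2::nat)^Suc J} = {..<2^J} \<union> (+) (2^J) ` {..<2^J}"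
  proof (rule set_eqI, rule iffI)
    fix i :: nat assume "i \<in> {..<2^Suc J}"
    then show "i \<in> {..<2^J} \<union> (+) (2^J) ` {..<2^J}"
      by (cases "i < 2^J") (auto intro!: image_eqI[of _ _ "i - 2^J"])
  qed auto
  then show ?thesis unfolding PP_def N_def using a_shift[OF J] by (auto simp: image_Un image_image)
qed

lemma PP_ge0: "x \<in> PP J \<Longrightarrow> 0 \<le> x" unfolding PP_def by auto
lemma PP_le: "x \<in> PP J \<Longrightarrow> x \<le> M J" unfolding PP_def M_def by auto
lemma M_in: "M J \<in> PP J" unfolding PP_def M_def by auto
lemma PP_SA: "PP J \<subseteq> SA" unfolding PP_def SA_def by auto
lemma M_less_N: "M J < N J" unfolding M_def N_def by simp
lemma M_mono: "J \<le> J' \<Longrightarrow> M J \<le> M J'" unfolding M_def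
  by (simp add: diff_le_mono power_increasing)
lemma N_mono: "J \<le> J' \<Longrightarrow> N J \<le> N J'" unfolding N_def
  by (simp add: power_increasing)
lemma PP_mono: "J \<le> J' \<Longrightarrow> PP J \<subseteq> PP J'"
proof -
  assume "J \<le> J'"
  then have "(2::nat)^J \<le> 2^J'" by (rule power_increasing) simp
  then show ?thesis unfolding PP_def by (intro image_mono) auto
qed
lemma SA_ge0: "x \<in> SA \<Longrightarrow> 0 \<le> x" unfolding SA_def by auto

lemma SA_below: "x \<in> SA \<Longrightarrow> x < N J \<Longrightarrow> x \<in> PP J"
  unfolding SA_def PP_def N_def by auto

lemma Gi: assumes "M l < x" "x \<notin> SA"
  shows "\<exists>u\<in>SA. \<exists>v\<in>SA. v < u \<and> u < x \<and> x = 2*u - v"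
proof -
  have x0: "0 \<le> x" using assms(1) unfolding M_def by linarith
  have "a (2^l - 1) < nat x" using assms(1) unfolding M_def by linarith
  moreover have "nat x \<notin> range a"
  proof
    assume "nat x \<in> range a"
    then obtain i where "nat x = a i" by blast
    then have "x = int (a i)" using x0 by linarith
    then show False using assms(2) unfolding SA_def by blast
  qed
  ultimately obtain p q where "p \<in> range a" "q \<in> range a" "p < q" "q < nat x" "p + nat x = 2*q"
    using G by blast
  then have "int q \<in> SA" "int p \<in> SA" "int p < int q" "int q < x" "x = 2 * int q - int p"
    unfolding SA_def using x0 by auto
  then show ?thesis by blast
qed

lemma lam_ge0: "0 \<le> lam"
proof (rule ccontr)
  assume "\<not> 0 \<le> lam"
  then have lt: "2 * M l + 1 < N l" using NM[of l] by simp
  have nin: "2 * M l + 1 \<notin> SA"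
  proof
    assume "2 * M l + 1 \<in> SA"
    then have "2 * M l + 1 \<in> PP l" using SA_below lt by blast
    then have "2 * M l + 1 \<le> M l" by (rule PP_le)
    then show False unfolding M_def by simp
  qed
  have "M l < 2 * M l + 1" unfolding M_def by simp
  then obtain u v where uv: "u \<in> SA" "v \<in> SA" "v < u" "u < 2 * M l + 1" "2 * M l + 1 = 2*u - v"
    using Gi nin by blast
  then have "u \<in> PP l" using SA_below lt by simp
  then have "u \<le> M l" by (rule PP_le)
  then show False using uv SA_ge0[of v] by linarith
qed

lemma lam_le: "lam \<le> M l" using NM[of l] M_less_N[of l] by simp

lemma gap: assumes "l \<le> J" "M J < x" "x < N J"
  shows "\<exists>u\<in>PP J. \<exists>v\<in>PP J. v < u \<and> x = 2*u - v"
proof -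
  have nin: "x \<notin> SA"
  proof
    assume "x \<in> SA"
    then have "x \<in> PP J" using SA_below assms(3) by blast
    then show False using PP_le assms(2) by fastforce
  qed
  have "M l < x" using M_mono[OF assms(1)] assms(2) by simp
  then obtain u v where uv: "u \<in> SA" "v \<in> SA" "v < u" "u < x" "x = 2*u - v" using Gi nin by blast
  then have "u \<in> PP J" "v \<in> PP J" using SA_below assms(3) by auto
  then show ?thesis using uv by blast
qed

end

context setting
begin

lemma PP_SucE: assumes "l \<le> J" "x \<in> PP (Suc J)"
  obtains "x \<in> PP J" | t where "t \<in> PP J" "x = N J + t"
  using assms PP_Suc by blast

lemma PP_Suc_top: "l \<le> J \<Longrightarrow> t \<in> PP J \<Longrightarrow> N J + t \<in> PP (Suc J)"
  using PP_Suc by blast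

lemma PP_Suc_low: "x \<in> PP J \<Longrightarrow> x \<in> PP (Suc J)"
  using PP_mono[of J "Suc J"] by auto

lemma M_ge_lam: assumes "l \<le> J" shows "lam \<le> M J"
  using lam_le M_mono[OF assms] by linarith

lemma N_gt_lam: assumes "l \<le> J" shows "lam < N J"
  using M_ge_lam[OF assms] M_less_N[of J] by linarith

lemma R_I: "u \<in> PP J \<Longrightarrow> v \<in> PP J \<Longrightarrow> z = 2*u - v \<Longrightarrow> z \<in> R J"
  unfolding R_def by blast

lemma R_E: "z \<in> R J \<Longrightarrow> (\<And>u v. u \<in> PP J \<Longrightarrow> v \<in> PP J \<Longrightarrow> z = 2*u - v \<Longrightarrow> P) \<Longrightarrow> P"
  unfolding R_def by blast

lemma gap2: assumes J: "l \<le> J" and z: "0 \<le> z" "z < N J"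
  obtains u v where "u \<in> PP J" "v \<in> PP J" "2 * N J + z = 2*(N J + u) - v"
  | u v where "u \<in> PP J" "v \<in> PP J" "2 * N J + z = 2*(N J + u) - (N J + v)"
proof -
  have "M (Suc J) < 2 * N J + z" using M_Suc[OF J] M_less_N[of J] z by linarith
  moreover have "2 * N J + z < N (Suc J)" using N_Suc[OF J] z by linarith
  ultimately have "\<exists>u\<in>PP (Suc J). \<exists>v\<in>PP (Suc J). v < u \<and> 2 * N J + z = 2*u - v"
    using gap[of "Suc J" "2 * N J + z"] J by simp
  then obtain u v where uv: "u \<in> PP (Suc J)" "v \<in> PP (Suc J)" "v < u" "2 * N J + z = 2*u - v"
    by blast
  have lamJ: "lam < N J" using N_gt_lam[OF J] .
  have "u \<notin> PP J"
  proof
    assume "u \<in> PP J"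
    then have "u \<le> M J" by (rule PP_le)
    moreover have "0 \<le> v" using uv(2) by (rule PP_ge0)
    ultimately show False using uv(4) NM[OF J] lamJ z by linarith
  qed
  then obtain u' where u': "u' \<in> PP J" "u = N J + u'" using PP_SucE[OF J uv(1)] by metis
  show ?thesis
  proof (cases rule: PP_SucE[OF J uv(2)])
    case 1 then show ?thesis using that(1)[of u' v] u' uv by simp
  next
    case (2 t) then show ?thesis using that(2)[of u' t] u' uv by simp
  qed
qed

lemma R1: assumes J: "l \<le> J" and z: "lam \<le> z" "z < N J" shows "z \<in> R J"
proof -
  have z0: "0 \<le> z" using lam_ge0 z by linarith
  show ?thesis
  proof (cases rule: gap2[OF J z0 z(2)])
    case (1 u v) then show ?thesis using R_I[of u J v z] by simp
  next
    case (2 u v)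
    then have "u \<le> M J" "0 \<le> v" using PP_le PP_ge0 by auto
    moreover have "2*u - v = N J + z" using 2(3) by (simp add: algebra_simps)
    ultimately have False using NM[OF J] z by linarith
    then show ?thesis ..
  qed
qed

lemma R2: assumes J: "l \<le> J" and z: "0 \<le> z" "z < N J" shows "z \<in> R (Suc J)"
proof (cases rule: gap2[OF J z])
  case (1 u v)
  then show ?thesis using R_I[of u "Suc J" v z] PP_Suc_low[of u J] PP_Suc_low[of v J] by simp
next
  case (2 u v)
  then show ?thesis using R_I[of u "Suc J" "N J + v" z] PP_Suc_low[of u J] PP_Suc_top[OF J, of v]
    by simp
qed

lemma RR: assumes J: "l < J" and z: "0 \<le> z" "z < N J" shows "z \<in> R J"
proof (cases "lam \<le> z")
  case True then show ?thesis using R1 J z by simp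
next
  case False
  obtain J' where J': "J = Suc J'" "l \<le> J'" using J by (metis Suc_le_eq less_imp_Suc_add le_add1)
  have "lam < N l" by (rule N_gt_lam) simp
  moreover have "N l \<le> N J'" using J' N_mono by simp
  ultimately show ?thesis using R2[OF J'(2), of z] J' False z by simp
qed

lemma R3: assumes J: "l < J" and z: "-(M J - M l - lam) \<le> z" "z < N J" shows "z \<in> R J"
  using J z
proof (induction J arbitrary: z)
  case 0 then show ?case by simp
next
  case (Suc J)
  show ?case
  proof (cases "0 \<le> z")
    case True then show ?thesis using RR Suc.prems by simp
  next
    case False
    have J: "l \<le> J" using Suc.prems by simp
    have "z + N J \<in> R J"
    proof (cases "l = J")
      case True
      then have "lam \<le> z + N J" using Suc.prems M_Suc[OF J] by simp
      then show ?thesis using R1[OF J] False by simp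
    next
      case False': False
      then have lJ: "l < J" using J by simp
      have "-(M J - M l - lam) \<le> z + N J" using Suc.prems M_Suc[OF J] by simp
      then show ?thesis using Suc.IH[OF lJ] False by simp
    qed
    then obtain u v where uv: "u \<in> PP J" "v \<in> PP J" "z + N J = 2*u - v" by (rule R_E)
    then show ?thesis using R_I[of u "Suc J" "N J + v" z] PP_Suc_low[of u J] PP_Suc_top[OF J, of v]
      by simp
  qed
qed

lemma a_diff: "l \<le> K \<Longrightarrow> int (a (2^K - 2^l)) = M K - M l"
proof (induction K rule: dec_induct)
  case base then show ?case using a0 by simp
next
  case (step K)
  have "(2::nat)^Suc K - 2^l = 2^K + (2^K - 2^l)"
    using power_increasing[of l K "2::nat"] step.hyps by simp
  moreover have "(2::nat)^K - 2^l < 2^K" by (simp add: diff_less)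
  ultimately have "a (2^Suc K - 2^l) = a (2^K) + a (2^K - 2^l)"
    using a_shift[OF step.hyps(1)] by simp
  then show ?case using step.IH M_Suc[OF step.hyps(1)] unfolding N_def by simp
qed

end

definition lev :: "nat \<Rightarrow> nat" where "lev i = (LEAST J. i < 2^Suc J)"

lemma lev_eqI: assumes "2^J \<le> i" "i < 2^Suc J" shows "lev i = J"
  unfolding lev_def
proof (rule Least_equality)
  show "i < 2^Suc J" by fact
  fix J' assume "i < (2::nat)^Suc J'"
  then have "(2::nat)^J < 2^Suc J'" using assms(1) by linarith
  then show "J \<le> J'" by (subst (asm) power_strict_increasing_iff) simp_all
qed

lemma lev_bounds: assumes "0 < n" shows "2^lev n \<le> n" "n < 2^Suc (lev n)"
proof -
  have "n < 2^n" by (rule less_exp)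
  then have "n < 2 * 2^n" by linarith
  then have "n < 2^Suc n" by simp
  then show "n < 2^Suc (lev n)" unfolding lev_def by (rule LeastI)
  show "2^lev n \<le> n"
  proof (cases "lev n")
    case 0 then show ?thesis using assms by simp
  next
    case (Suc m)
    have "\<not> n < 2^Suc m"
    proof
      assume "n < 2^Suc m"
      then have "lev n \<le> m" unfolding lev_def by (rule Least_le)
      then show False using Suc by simp
    qed
    then show ?thesis using Suc by simp
  qed
qed

context setting
begin

definition beta :: "nat \<Rightarrow> int" where "beta J = 2^(J-k) * c"
definition D :: "nat \<Rightarrow> int" where "D J = N J + beta J"
definition b :: "nat \<Rightarrow> int" where
  "b i = int (a i) + (if i < 2^k then 0 else 2^(lev i - k) * c)"
definition BB :: "nat \<Rightarrow> int set" where "BB J = b ` {..<2^J}"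
definition mB :: "nat \<Rightarrow> int" where "mB J = b (2^J - 1)"

lemma c_ge0: "0 \<le> c" using lam_ge0 lc by simp

lemma c_le: "c \<le> M k - M l - lam" using cu a_diff[OF lk] by simp

lemma c_less_N: "c < N k"
proof -
  have "M l \<ge> 0" unfolding M_def by simp
  then show ?thesis using c_le lam_ge0 M_less_N[of k] by linarith
qed

lemma kl_eq: "k = l \<Longrightarrow> c = 0 \<and> lam = 0"
  using c_le lc lam_ge0 by simp

lemma beta_k[simp]: "beta k = c" unfolding beta_def by simp
lemma beta_Suc: "k \<le> J \<Longrightarrow> beta (Suc J) = 2 * beta J"
  unfolding beta_def by (simp add: Suc_diff_le)
lemma beta_ge_c: "k \<le> J \<Longrightarrow> c \<le> beta J"
proof (induction J rule: dec_induct)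
  case base then show ?case by simp
next
  case (step J) then show ?case using beta_Suc[OF step.hyps(1)] c_ge0 by simp
qed
lemma beta_le_N: "k \<le> J \<Longrightarrow> beta J \<le> N J"
proof (induction J rule: dec_induct)
  case base then show ?case using c_less_N by simp
next
  case (step J)
  have "0 \<le> beta J" using beta_ge_c[OF step.hyps(1)] c_ge0 by simp
  then show ?case using beta_Suc[OF step.hyps(1)] N_Suc[of J] lk step by simp
qed

lemma b_low: "i < 2^k \<Longrightarrow> b i = int (a i)" unfolding b_def by simp

lemma b_high: assumes J: "k \<le> J" and i: "i < 2^J" shows "b (2^J + i) = D J + int (a i)"
proof -
  have "lev (2^J + i) = J" by (rule lev_eqI) (use i in auto)
  moreover have "\<not> 2^J + i < (2::nat)^k"
  proof -
    have "(2::nat)^k \<le> 2^J" by (rule power_increasing[OF J]) simp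
    then show ?thesis by linarith
  qed
  moreover have "a (2^J + i) = a (2^J) + a i" using a_shift[of J i] J lk i by simp
  ultimately show ?thesis unfolding b_def D_def beta_def N_def by simp
qed

lemma b_pow: "k \<le> J \<Longrightarrow> b (2^J) = D J" using b_high[of J 0] a0 by simp

lemma BB_k: "BB k = PP k" unfolding BB_def PP_def using b_low by auto

lemma BB_Suc: assumes J: "k \<le> J" shows "BB (Suc J) = BB J \<union> (+) (D J) ` PP J"
proof -
  have "{..<(2::nat)^Suc J} = {..<2^J} \<union> (+) (2^J) ` {..<2^J}"
  proof (rule set_eqI, rule iffI)
    fix i :: nat assume "i \<in> {..<2^Suc J}"
    then show "i \<in> {..<2^J} \<union> (+) (2^J) ` {..<2^J}"
      by (cases "i < 2^J") (auto intro!: image_eqI[of _ _ "i - 2^J"])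
  qed auto
  then show ?thesis unfolding BB_def PP_def using b_high[OF J] by (auto simp: image_Un image_image)
qed

lemma mB_k: "mB k = M k" unfolding mB_def M_def using b_low by simp

lemma mB_Suc: assumes J: "k \<le> J" shows "mB (Suc J) = D J + M J"
proof -
  have "(2::nat)^Suc J - 1 = 2^J + (2^J - 1)" by simp
  then show ?thesis unfolding mB_def M_def using b_high[OF J, of "2^J - 1"] by simp
qed

lemma D_ge: "k \<le> J \<Longrightarrow> N J + c \<le> D J" unfolding D_def using beta_ge_c by simp

lemma D_Suc: assumes J: "k \<le> J" shows "D (Suc J) = 2 * mB (Suc J) + 1 - lam"
proof -
  have lJ: "l \<le> J" using J lk by simp
  show ?thesis unfolding D_def
    using mB_Suc[OF J] beta_Suc[OF J] N_Suc[OF lJ] NM[OF lJ] unfolding D_def by simp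
qed

lemma D_Suc': assumes J: "k \<le> J" shows "D (Suc J) = 2 * D J + N J"
  using D_Suc[OF J] mB_Suc[OF J] NM[of J] J lk by simp

lemma mB_ge_lam: "k \<le> J \<Longrightarrow> lam \<le> mB J"
proof (induction J rule: dec_induct)
  case base then show ?case using mB_k M_ge_lam lk by simp
next
  case (step J)
  have "0 \<le> D J" using D_ge[OF step.hyps(1)] c_ge0 M_less_N[of J] unfolding M_def by simp
  then show ?case using mB_Suc[OF step.hyps(1)] M_ge_lam[of J] step.hyps lk by simp
qed

lemma mB_less_D: assumes J: "k \<le> J" shows "mB J < D J"
proof (cases "J = k")
  case True then show ?thesis using mB_k D_ge[of k] M_less_N[of k] c_ge0 by simp
next
  case False
  then obtain J' where J': "J = Suc J'" "k \<le> J'" using J by (metis le_SucE le_refl not_less_eq_eq Suc_pred' le_imp_less_Suc less_imp_Suc_add le_add1 lessI order_le_less)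
  show ?thesis using D_Suc[OF J'(2)] mB_ge_lam[OF J] J' by simp
qed

lemma BB_bounds: "k \<le> J \<Longrightarrow> x \<in> BB J \<Longrightarrow> 0 \<le> x \<and> x \<le> mB J"
proof (induction J arbitrary: x rule: dec_induct)
  case base then show ?case using BB_k mB_k PP_ge0 PP_le by auto
next
  case (step J)
  show ?case
  proof (cases "x \<in> BB J")
    case True
    then have "x \<le> mB J" "0 \<le> x" using step by auto
    then show ?thesis using mB_less_D[OF step.hyps(1)] mB_Suc[OF step.hyps(1)] M_def by fastforce
  next
    case False
    then obtain t where t: "t \<in> PP J" "x = D J + t" using step.prems BB_Suc[OF step.hyps(1)] by blast
    have "0 \<le> D J" using D_ge[OF step.hyps(1)] c_ge0 M_less_N[of J] unfolding M_def by simp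
    then show ?thesis using t PP_ge0 PP_le mB_Suc[OF step.hyps(1)] by fastforce
  qed
qed

lemma BB_mono: "k \<le> J \<Longrightarrow> J \<le> J' \<Longrightarrow> BB J \<subseteq> BB J'"
  unfolding BB_def using power_increasing[of J J' "2::nat"] by (intro image_mono) auto

lemma BB_range: "BB J \<subseteq> range b" unfolding BB_def by auto

lemma PPk_BB: "k \<le> J \<Longrightarrow> PP k \<subseteq> BB J" using BB_mono BB_k by blast

lemma BB_low: "k \<le> J \<Longrightarrow> x \<in> BB J \<Longrightarrow> x < N k \<Longrightarrow> x \<in> PP k"
proof (induction J rule: dec_induct)
  case base then show ?case using BB_k by simp
next
  case (step J)
  show ?case
  proof (cases "x \<in> BB J")
    case True then show ?thesis using step by simp
  next
    case False
    then obtain t where t: "t \<in> PP J" "x = D J + t" using step.prems BB_Suc[OF step.hyps(1)] by blast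
    have "N k \<le> N J" using N_mono step.hyps by simp
    then show ?thesis using t PP_ge0[of t J] D_ge[OF step.hyps(1)] c_ge0 step.prems by simp
  qed
qed

lemma BB_top: assumes J: "k \<le> J" and y: "y \<in> BB (Suc J)" "mB J < y" shows "y - D J \<in> PP J"
proof -
  have "y \<notin> BB J" using BB_bounds[OF J] y by fastforce
  then show ?thesis using y BB_Suc[OF J] by auto
qed

end

context setting
begin

lemma RJ: assumes J: "k \<le> J" and z: "0 \<le> z" "z < N J" shows "z \<in> R J"
proof (cases "l < J")
  case True then show ?thesis using RR z by simp
next
  case False
  then have "J = l" "k = l" using J lk by auto
  then show ?thesis using kl_eq R1[of J z] z by simp
qed

lemma Zlem: "k \<le> J \<Longrightarrow> 0 \<le> z \<Longrightarrow> z < D J \<Longrightarrow> \<exists>u\<in>PP J. \<exists>w\<in>BB J. z = beta J + 2*u - w"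
proof (induction J arbitrary: z rule: dec_induct)
  case base
  have zb: "z - c < N k" using base unfolding D_def by simp
  have "z - c \<in> R k"
  proof (cases "l < k")
    case True
    have "-(M k - M l - lam) \<le> z - c" using c_le base by simp
    moreover have "z - c < N k" using base unfolding D_def by simp
    ultimately show ?thesis using R3[OF True] by simp
  next
    case False
    then have "k = l" using lk by simp
    then show ?thesis using kl_eq R1[of k "z - c"] base zb lk by simp
  qed
  then obtain u v where "u \<in> PP k" "v \<in> PP k" "z - c = 2*u - v" by (rule R_E)
  then show ?case using BB_k by force
next
  case (step J)
  have J: "k \<le> J" by fact
  have lJ: "l \<le> J" using J lk by simp
  have bJ0: "0 \<le> beta J" using beta_ge_c[OF J] c_ge0 by simp
  have bN: "beta J \<le> N J" using beta_le_N[OF J] .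
  have DJ: "D J = N J + beta J" unfolding D_def ..
  have bS: "beta (Suc J) = 2 * beta J" using beta_Suc[OF J] .
  have DS: "D (Suc J) = 2 * D J + N J" using D_Suc'[OF J] .
  have z: "0 \<le> z" "z < D (Suc J)" using step.prems by auto
  show ?case
  proof (cases "z < beta J")
    case zb: True
    have "z + N J - beta J \<in> R J" using RJ[OF J] zb z bN by simp
    then obtain u v where uv: "u \<in> PP J" "v \<in> PP J" "z + N J - beta J = 2*u - v" by (rule R_E)
    have "u \<in> PP (Suc J)" using uv PP_Suc_low by simp
    moreover have "D J + v \<in> BB (Suc J)" using uv BB_Suc[OF J] by simp
    moreover have "z = beta (Suc J) + 2*u - (D J + v)" using uv bS DJ by simp
    ultimately show ?thesis by blast
  next
    case zb: False
    show ?thesis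
    proof (cases "z < beta J + D J")
      case True
      then obtain u w where uw: "u \<in> PP J" "w \<in> BB J" "z - beta J = beta J + 2*u - w"
        using step.IH[of "z - beta J"] zb by auto
      have "u \<in> PP (Suc J)" using uw PP_Suc_low by simp
      moreover have "w \<in> BB (Suc J)" using uw BB_Suc[OF J] by simp
      moreover have "z = beta (Suc J) + 2*u - w" using uw bS by simp
      ultimately show ?thesis by blast
    next
      case zb2: False
      show ?thesis
      proof (cases "z < 2 * N J + beta J")
        case True
        have "z - beta J - N J \<in> R J" using RJ[OF J] True zb2 DJ bJ0 by simp
        then obtain u v where uv: "u \<in> PP J" "v \<in> PP J" "z - beta J - N J = 2*u - v" by (rule R_E)
        have "N J + u \<in> PP (Suc J)" using uv PP_Suc_top[OF lJ] by simp
        moreover have "D J + v \<in> BB (Suc J)" using uv BB_Suc[OF J] by simp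
        moreover have "z = beta (Suc J) + 2*(N J + u) - (D J + v)" using uv bS DJ by simp
        ultimately show ?thesis by blast
      next
        case False
        then obtain u w where uw: "u \<in> PP J" "w \<in> BB J" "z - 2 * N J - beta J = beta J + 2*u - w"
          using step.IH[of "z - 2 * N J - beta J"] z DS DJ by auto
        have "N J + u \<in> PP (Suc J)" using uw PP_Suc_top[OF lJ] by simp
        moreover have "w \<in> BB (Suc J)" using uw BB_Suc[OF J] by simp
        moreover have "z = beta (Suc J) + 2*(N J + u) - w" using uw bS by simp
        ultimately show ?thesis by blast
      qed
    qed
  qed
qed

definition tfi :: "int set \<Rightarrow> bool" where
  "tfi X \<longleftrightarrow> (\<forall>x\<in>X. \<forall>y\<in>X. \<forall>z\<in>X. x + z = 2*y \<longrightarrow> x = z)"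

lemma tfiI: "(\<And>x y z. x \<in> X \<Longrightarrow> y \<in> X \<Longrightarrow> z \<in> X \<Longrightarrow> x + z = 2*y \<Longrightarrow> x < z \<Longrightarrow> False) \<Longrightarrow> tfi X"
  unfolding tfi_def by (metis add.commute linorder_neqE)

lemma tfiD: "tfi X \<Longrightarrow> x \<in> X \<Longrightarrow> y \<in> X \<Longrightarrow> z \<in> X \<Longrightarrow> x + z = 2*y \<Longrightarrow> x = z"
  unfolding tfi_def by blast

lemma tf_BB: "k \<le> J \<Longrightarrow> tfi (BB J)"
proof (induction J rule: dec_induct)
  case base
  show ?case
    by (rule tfiI) (use noAP PP_SA BB_k in fastforce)
next
  case (step J)
  have J: "k \<le> J" by fact
  have lJ: "l \<le> J" using J lk by simp
  have X: "x \<in> BB J \<Longrightarrow> 0 \<le> x \<and> x \<le> mB J" for x using BB_bounds[OF J] by blast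
  have mD: "mB J < D J" using mB_less_D[OF J] .
  show ?case
  proof (rule tfiI)
    fix x y z assume xyz: "x \<in> BB (Suc J)" "y \<in> BB (Suc J)" "z \<in> BB (Suc J)" "x + z = 2*y" "x < z"
    have cases: "w \<in> BB J \<or> (\<exists>t\<in>PP J. w = D J + t)" if "w \<in> BB (Suc J)" for w
      using that BB_Suc[OF J] by auto
    show False
    proof (cases "z \<in> BB J")
      case True
      then have "z \<le> mB J" using X by blast
      then have "y \<in> BB J" "x \<in> BB J" using cases[OF xyz(2)] cases[OF xyz(1)] xyz mD PP_ge0 by fastforce+
      then show False using step.IH True xyz tfiD by fastforce
    next
      case False
      then obtain tz where tz: "tz \<in> PP J" "z = D J + tz" using cases[OF xyz(3)] by blast
      show False
      proof (cases "y \<in> BB J")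
        case False
        then obtain ty where ty: "ty \<in> PP J" "y = D J + ty" using cases[OF xyz(2)] by blast
        show False
        proof (cases "x \<in> BB J")
          case False
          then obtain tx where tx: "tx \<in> PP J" "x = D J + tx" using cases[OF xyz(1)] by blast
          have "tx + tz = 2 * ty" using tx ty tz xyz by simp
          then have "tx = tz" using noAP PP_SA tx ty tz by blast
          then show False using tx tz xyz by simp
        next
          case True
          have "x = 2 * y - z" using xyz by simp
          then have "D J - M J \<le> x" using ty tz PP_le[of tz J] PP_ge0[of ty J] by simp
          moreover have "mB J < D J - M J"
          proof (cases "J = k")
            case True then show ?thesis using mB_k D_ge[of k] NM[of k] lk lc by simp
          next
            case False
            then obtain J' where J': "J = Suc J'" "k \<le> J'" using J
              by (metis Suc_pred' le_imp_less_Suc less_imp_Suc_add le_add1 order_le_less le_SucE)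
            have "mB J = M J + beta J'" using mB_Suc[OF J'(2)] M_Suc[of J'] J' lk unfolding D_def by simp
            then show ?thesis using D_Suc[OF J'(2)] J' beta_ge_c[OF J'(2)] lc by simp
          qed
          ultimately show False using X[OF True] by simp
        qed
      next
        case yX: True
        have xX: "x \<in> BB J"
        proof (rule ccontr)
          assume "x \<notin> BB J"
          then obtain tx where "tx \<in> PP J" "x = D J + tx" using cases[OF xyz(1)] by blast
          then have "D J \<le> x" using PP_ge0 by fastforce
          moreover have "x < y" using xyz by simp
          ultimately show False using X[OF yX] mD by simp
        qed
        have y0: "y \<le> mB J" "0 \<le> x" using X xX yX by auto
        have z0: "D J \<le> z" using tz PP_ge0 by fastforce
        show False
        proof (cases "J = k")
          case True
          then show False using y0 z0 xyz mB_k D_ge[of k] NM[of k] lk lc by simp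
        next
          case False
          then obtain J' where J': "J = Suc J'" "k \<le> J'" using J
            by (metis Suc_pred' le_imp_less_Suc less_imp_Suc_add le_add1 order_le_less le_SucE)
          have lJ': "l \<le> J'" using J' lk by simp
          define s where "s = mB J - y"
          have DJ: "D J = 2 * mB J + 1 - lam" using D_Suc[OF J'(2)] J' by simp
          have xs: "x = lam - 1 - 2*s - tz" using xyz tz DJ s_def by simp
          have s0: "0 \<le> s" "2 * s \<le> lam - 1" using s_def y0 xs PP_ge0[OF tz(1)] by auto
          have xlow: "x \<le> lam - 1" using xs s0 PP_ge0[OF tz(1)] by simp
          have "lam < N k" using N_gt_lam lk by simp
          then have xPk: "x \<in> PP k" using BB_low[OF J xX] xlow by simp
          have mBJ: "mB J = D J' + M J'" using mB_Suc[OF J'(2)] J' by simp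
          have "mB J' < y"
            using mB_less_D[OF J'(2)] M_ge_lam[OF lJ'] s_def s0 mBJ by simp
          then have "y - D J' \<in> PP J'" using BB_top[OF J'(2)] yX J' by simp
          then have y'in: "N J' + (y - D J') \<in> PP J" using PP_Suc_top[OF lJ'] J' by simp
          have MJ: "M J = N J' + M J'" using M_Suc[OF lJ'] J' by simp
          have "x + (N J + tz) = 2 * (N J' + (y - D J'))"
            using xs NM[OF lJ] MJ mBJ s_def by simp
          moreover have "N J + tz \<in> SA" using PP_Suc_top[OF lJ tz(1)] PP_SA by blast
          moreover have "x \<in> SA" using xPk PP_SA by blast
          moreover have "N J' + (y - D J') \<in> SA" using y'in PP_SA by blast
          ultimately have "x = N J + tz" using noAP by blast
          moreover have "lam < N J" using N_gt_lam[OF lJ] .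
          ultimately show False using xlow PP_ge0[OF tz(1)] by simp
        qed
      qed
    qed
  qed
qed

end

context setting
begin

lemma SucE_k: assumes "Suc k \<le> J" obtains J' where "J = Suc J'" "k \<le> J'"
  using assms by (metis Suc_le_D Suc_le_mono)

lemma cover_step:
  assumes J: "Suc k \<le> J" and x: "mB J < x" "x \<le> mB (Suc J)" and nr: "x \<notin> range b"
  shows "\<exists>y\<in>BB (Suc J). \<exists>w\<in>BB (Suc J). w < y \<and> x = 2*y - w"
proof -
  obtain J' where J': "J = Suc J'" "k \<le> J'" using SucE_k[OF J] by blast
  have kJ: "k \<le> J" using J by simp
  have lJ: "l \<le> J" using kJ lk by simp
  have lJ': "l \<le> J'" using J' lk by simp
  have mBJ: "mB J = D J' + M J'" using mB_Suc[OF J'(2)] J' by simp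
  have DJ: "D J = 2 * mB J + 1 - lam" using D_Suc[OF J'(2)] J' by simp
  have DJ': "D J' = N J' + beta J'" unfolding D_def ..
  have NJ': "N J' = 2 * M J' + 1 - lam" using NM[OF lJ'] .
  have BBJ: "BB J \<subseteq> BB (Suc J)" using BB_mono[OF kJ] by simp
  have BBJ': "BB J' \<subseteq> BB J" using BB_mono[OF J'(2)] J' by simp
  have topJ: "D J' + t \<in> BB J" if "t \<in> PP J'" for t using that BB_Suc[OF J'(2)] J' by simp
  have topSJ: "D J + t \<in> BB (Suc J)" if "t \<in> PP J" for t using that BB_Suc[OF kJ] by simp
  have mD': "mB J' < D J'" using mB_less_D[OF J'(2)] .
  show ?thesis
  proof (cases "x < D J")
    case xD: True
    show ?thesis
    proof (cases "x < D J' + N J'")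
      case True
      have "M J' < x - D J'" using x mBJ by simp
      then obtain u v where uv: "u \<in> PP J'" "v \<in> PP J'" "v < u" "x - D J' = 2*u - v"
        using gap[OF lJ', of "x - D J'"] True by auto
      then show ?thesis using topJ[of u] topJ[of v] BBJ by (intro bexI[of _ "D J' + u"] bexI[of _ "D J' + v"]) auto
    next
      case False
      have "x - D J' - N J' < D J'" using xD DJ mBJ NJ' by simp
      then obtain u w where uw: "u \<in> PP J'" "w \<in> BB J'" "x - D J' - N J' = beta J' + 2*u - w"
        using Zlem[OF J'(2), of "x - D J' - N J'"] False by auto
      have "w \<le> mB J'" using BB_bounds[OF J'(2) uw(2)] by simp
      moreover have "0 \<le> u" using PP_ge0[OF uw(1)] .
      ultimately have "w < D J' + u" using mD' by simp
      moreover have "x = 2 * (D J' + u) - w" using uw DJ' by simp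
      ultimately show ?thesis using topJ[OF uw(1)] BBJ BBJ' uw(2) by blast
    qed
  next
    case False
    have "D J \<in> BB (Suc J)" using topSJ[of 0] a0 unfolding PP_def by force
    then have "x \<noteq> D J" using nr BB_range by blast
    then have xD: "D J < x" using False by simp
    define t where "t = x - D J"
    have t: "0 < t" "t \<le> M J" using xD x mB_Suc[OF kJ] t_def by auto
    have tn: "t \<notin> PP J"
    proof
      assume "t \<in> PP J"
      then have "x \<in> BB (Suc J)" using topSJ t_def by force
      then show False using nr BB_range by blast
    qed
    have tN: "t < N J" using t M_less_N[of J] by simp
    show ?thesis
    proof (cases "M l < t")
      case True
      have "t \<notin> SA" using tn SA_below tN by blast
      then obtain u v where uv: "u \<in> SA" "v \<in> SA" "v < u" "u < t" "t = 2*u - v" using Gi True by blast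
      have "u \<in> PP J" "v \<in> PP J" using uv SA_below tN by auto
      then show ?thesis using topSJ uv t_def by (intro bexI[of _ "D J + u"] bexI[of _ "D J + v"]) auto
    next
      case tl: False
      have MlMJ: "M l + lam < M J"
      proof -
        have "M (Suc l) \<le> M J" using M_mono J lk by simp
        moreover have "M (Suc l) = N l + M l" using M_Suc by simp
        moreover have "lam < N l" using N_gt_lam by simp
        ultimately show ?thesis by simp
      qed
      have Xn: "N J + t \<notin> SA"
      proof
        assume "N J + t \<in> SA"
        moreover have "N J + t < N (Suc J)" using N_Suc[OF lJ] tN t by simp
        ultimately have "N J + t \<in> PP (Suc J)" using SA_below by blast
        then have "N J + t \<in> PP J \<or> t \<in> PP J" using PP_Suc[OF lJ] by auto
        moreover have "N J + t \<notin> PP J"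
        proof
          assume "N J + t \<in> PP J"
          then have "N J + t \<le> M J" using PP_le by blast
          then show False using M_less_N[of J] t by simp
        qed
        ultimately show False using tn by blast
      qed
      have "M l < N J + t" using M_mono[OF lJ] M_less_N[of J] t by simp
      then obtain u' v' where uv: "u' \<in> SA" "v' \<in> SA" "v' < u'" "u' < N J + t" "N J + t = 2*u' - v'"
        using Gi Xn by blast
      have NS: "N J + t < N (Suc J)" using N_Suc[OF lJ] tN t by simp
      have u'P: "u' \<in> PP (Suc J)" using uv SA_below NS by simp
      have v'P: "v' \<in> PP (Suc J)" using uv SA_below NS by simp
      show ?thesis
      proof (cases "u' \<in> PP J")
        case False
        then obtain u where u: "u \<in> PP J" "u' = N J + u" using PP_SucE[OF lJ u'P] by metis
        show ?thesis
        proof (cases "v' \<in> PP J")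
          case True
          have "v' = N J + 2*u - t" using uv u by simp
          then have "N J - M l \<le> v'" using tl PP_ge0[OF u(1)] by simp
          moreover have "v' \<le> M J" using PP_le True by simp
          ultimately have False using NM[OF lJ] MlMJ by simp
          then show ?thesis ..
        next
          case False
          then obtain v where v: "v \<in> PP J" "v' = N J + v" using PP_SucE[OF lJ v'P] by metis
          have "t = 2*u - v" "v < u" using uv u v by auto
          then show ?thesis using topSJ u v t_def by (intro bexI[of _ "D J + u"] bexI[of _ "D J + v"]) auto
        qed
      next
        case True
        define s where "s = M J - u'"
        have s0: "0 \<le> s" using PP_le[OF True] s_def by simp
        have v'eq: "v' = lam - 1 - 2*s - t" using uv s_def NM[OF lJ] by simp
        have v'0: "0 \<le> v'" using SA_ge0 uv by simp
        have MJ: "M J = N J' + M J'" using M_Suc[OF lJ'] J' by simp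
        have "N J' \<le> u'" using v'eq v'0 s_def t s0 M_ge_lam[OF lJ'] MJ by simp
        then have "u' \<notin> PP J'" using PP_le[of u' J'] M_less_N[of J'] by fastforce
        then obtain p where p: "p \<in> PP J'" "u' = N J' + p" using PP_SucE[OF lJ'] True J' by metis
        have yin: "D J' + p \<in> BB J" using topJ p by simp
        have "lam < N k" using N_gt_lam lk by simp
        then have "v' < N k" using v'eq s0 t by simp
        then have "v' \<in> PP k" using SA_below uv by simp
        then have win: "v' \<in> BB J" using PPk_BB kJ by blast
        have "x = 2 * (D J' + p) - v'"
          using v'eq p s_def MJ mBJ DJ t_def by simp
        moreover have "v' < D J' + p"
        proof -
          have "N k \<le> D J'" using D_ge[OF J'(2)] N_mono[OF J'(2)] c_ge0 by simp
          then show ?thesis using \<open>v' < N k\<close> PP_ge0[OF p(1)] by simp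
        qed
        ultimately show ?thesis using yin win BBJ by blast
      qed
    qed
  qed
qed

lemma cover: "Suc k \<le> J \<Longrightarrow> mB (Suc k) < x \<Longrightarrow> x \<le> mB J \<Longrightarrow> x \<notin> range b \<Longrightarrow>
   \<exists>y\<in>BB J. \<exists>w\<in>BB J. w < y \<and> x = 2*y - w"
proof (induction J rule: dec_induct)
  case base then show ?case by simp
next
  case (step J)
  show ?case
  proof (cases "x \<le> mB J")
    case True
    then obtain y w where "y \<in> BB J" "w \<in> BB J" "w < y" "x = 2*y - w" using step by blast
    moreover have "BB J \<subseteq> BB (Suc J)" using BB_mono step.hyps(1) by simp
    ultimately show ?thesis by blast
  next
    case False
    then show ?thesis using cover_step[OF step.hyps(1)] step.prems by simp
  qed
qed

end

context setting
begin

lemma b_Suc: "b i < b (Suc i)"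
proof (cases "Suc i < 2^k")
  case True then show ?thesis using b_low by simp
next
  case False
  define J where "J = lev (Suc i)"
  have J1: "2^J \<le> Suc i" unfolding J_def by (rule lev_bounds) simp
  have J2: "Suc i < 2 * 2^J" using lev_bounds(2)[of "Suc i"] unfolding J_def by simp
  have "(2::nat)^k < 2^Suc J" using False J2 by simp
  then have kJ: "k \<le> J" by (subst (asm) power_strict_increasing_iff) simp_all
  show ?thesis
  proof (cases "Suc i = 2^J")
    case True
    then have "i = 2^J - 1" by simp
    then have "b i = mB J" unfolding mB_def by simp
    then show ?thesis using b_pow[OF kJ] True mB_less_D[OF kJ] by simp
  next
    case False
    then have r: "i = 2^J + (i - 2^J)" "Suc i = 2^J + Suc (i - 2^J)" "Suc (i - 2^J) < 2^J"
      using J1 J2 by auto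
    have r4: "i - 2^J < 2^J" using r(3) by simp
    have e1: "b (2^J + (i - 2^J)) = D J + int (a (i - 2^J))" by (rule b_high[OF kJ r4])
    have e2: "b (2^J + Suc (i - 2^J)) = D J + int (a (Suc (i - 2^J)))" by (rule b_high[OF kJ r(3)])
    from e1 have e1': "b i = D J + int (a (i - 2^J))" by (simp only: r(1)[symmetric])
    from e2 have e2': "b (Suc i) = D J + int (a (Suc (i - 2^J)))" by (simp only: r(2)[symmetric])
    show ?thesis using e1' e2' by simp
  qed
qed

lemma b_sm: "strict_mono b" unfolding strict_mono_Suc_iff using b_Suc by blast

lemma b0: "b 0 = 0" using b_low[of 0] a0 by simp

lemma b_ge: "int i \<le> b i"
proof (induction i)
  case 0 then show ?case using b0 by simp
next
  case (Suc i) then show ?case using b_Suc[of i] by simp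
qed

lemma b_nonneg: "0 \<le> b i" using b_ge[of i] by simp

lemma b_mid: "2^k \<le> i \<Longrightarrow> i < 2^Suc k \<Longrightarrow> b i = int (a i) + c"
proof -
  assume i: "2^k \<le> i" "i < 2^Suc k"
  have "lev i = k" by (rule lev_eqI) (use i in auto)
  then show ?thesis unfolding b_def using i by simp
qed

lemma tfi_range: "tfi (range b)"
proof (rule tfiI)
  fix x y z assume xyz: "x \<in> range b" "y \<in> range b" "z \<in> range b" "x + z = 2*y" "x < z"
  then obtain i j m where ijm: "x = b i" "y = b j" "z = b m" by blast
  define J where "J = k + i + j + m + 1"
  have "i < J" "j < J" "m < J" unfolding J_def by auto
  moreover have "J < 2^J" by (rule less_exp)
  ultimately have "i < 2^J" "j < 2^J" "m < 2^J" by linarith+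
  then have "x \<in> BB J" "y \<in> BB J" "z \<in> BB J" unfolding BB_def using ijm by auto
  moreover have "tfi (BB J)" using tf_BB J_def by simp
  ultimately show False using tfiD xyz by fastforce
qed

lemma cover_final:
  assumes "mB (Suc k) < x" "x \<notin> range b"
  shows "\<exists>y\<in>range b. \<exists>w\<in>range b. w < y \<and> x = 2*y - w"
proof -
  define J where "J = Suc k + nat x"
  have "int (2^J - 1) \<le> mB J" unfolding mB_def using b_ge by blast
  moreover have "J < 2^J" using less_exp by blast
  ultimately have "x \<le> mB J" unfolding J_def using assms by linarith
  then obtain y w where "y \<in> BB J" "w \<in> BB J" "w < y" "x = 2*y - w"
    using cover[of J x] assms J_def by auto
  then show ?thesis using BB_range by blast
qed

end

lemma sorted_image_upto:
  fixes f :: "nat \<Rightarrow> nat"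
  assumes "strict_mono f"
  shows "sorted_list_of_set (f ` {..<n}) = map f [0..<n]"
proof -
  have inj: "inj_on f {..<n}" using assms strict_mono_imp_inj_on by blast
  have "sorted_wrt (<) (map f [0..<n])"
    using assms by (auto simp: sorted_wrt_iff_nth_less strict_mono_less)
  moreover have "set (map f [0..<n]) = f ` {..<n}" by (auto simp: atLeast0LessThan)
  moreover have "length (map f [0..<n]) = card (f ` {..<n})" using card_image[OF inj] by simp
  ultimately show ?thesis
    using sorted_list_of_set.sorted_key_list_of_set_unique[where A="f ` {..<n}" and l="map f [0..<n]"]
    by simp
qed

theorem theorem4:
  fixes A :: "nat set" and lam :: int and l k :: nat and c :: int
  assumes "finite A" and "three_free A" and "0 \<in> A"
    and "independent (stanley A) lam"
    and "adequate A lam l"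
    and "\<forall>k0. adequate A lam k0 \<longrightarrow> l \<le> k0"
    and "l \<le> k"
    and "lam \<le> c" and "c \<le> int (stanley A (2^k - 2^l)) - lam"
  shows "three_free (Ak_set A k c) \<and>
         regular_with_core (stanley (Ak_set A k c)) (stanley A)"
proof -
  let ?a = "stanley A"
  have Ane: "A \<noteq> {}" using assms(3) by blast
  interpret S: stinit A by (rule stinit.intro[OF assms(1) assms(2) Ane])
  have sm: "strict_mono ?a" by (rule S.strict_mono_stanley)
  have a0: "?a 0 = 0"
  proof -
    have cA: "0 < card A" using assms(1,3) card_gt_0_iff by blast
    have "?a 0 = sorted_list_of_set A ! 0" using stanley_small[OF cA] .
    also have "\<dots> = Min A"
    proof -
      have "A \<noteq> {}" using assms(3) by blast
      then show ?thesis using sorted_list_of_set_nonempty[OF assms(1)] by simp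
    qed
    also have "\<dots> = 0" using assms(1,3) by (meson Min_le le_zero_eq)
    finally show ?thesis .
  qed
  have eqs: "\<forall>K\<ge>l. indep_eqs ?a lam K" using assms(5) unfolding adequate_def by (rule conjunct1)
  have G: "\<forall>x. ?a (2^l - 1) < x \<longrightarrow> x \<notin> range ?a \<longrightarrow>
       (\<exists>p q. p \<in> range ?a \<and> q \<in> range ?a \<and> p < q \<and> q < x \<and> p + x = 2*q)"
  proof (intro allI impI)
    fix x assume x: "?a (2^l - 1) < x" "x \<notin> range ?a"
    have "nucleating_set A A" unfolding nucleating_set_def stanley_init_def using assms(1-3) by simp
    then obtain B where B: "nucleating_set A B" "\<forall>B'. nucleating_set A B' \<longrightarrow> card B \<le> card B'"
      using ex_has_least_nat[of "nucleating_set A" A card] by blast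
    then have mB: "minimal_nucleating_set A B" unfolding minimal_nucleating_set_def by blast
    have "\<forall>M. minimal_nucleating_set A M \<longrightarrow> ?a (2^l) \<notin> M" using assms(5) unfolding adequate_def by (rule conjunct2)
    then have nB: "?a (2^l) \<notin> B" using mB by blast
    have Bi: "finite B" "three_free B" "0 \<in> B" "stanley B = ?a"
      using B(1) unfolding nucleating_set_def stanley_init_def by auto
    have Bne: "B \<noteq> {}" using Bi(3) by blast
    interpret SB: stinit B by (rule stinit.intro[OF Bi(1) Bi(2) Bne])
    have imB: "?a ` {..<card B} = B" using SB.stanley_image_card Bi(4) by simp
    have cB: "card B \<le> 2^l"
    proof (rule ccontr)
      assume "\<not> card B \<le> 2^l"
      then have "?a (2^l) \<in> ?a ` {..<card B}" by auto
      then show False using imB nB by simp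
    qed
    have cB0: "0 < card B" using Bi card_gt_0_iff by blast
    have "?a (card B - 1) \<le> ?a (2^l - 1)" using cB sm by (simp add: strict_mono_less_eq)
    then have "stanley B (card B - 1) < x" using x Bi(4) by simp
    then show "\<exists>p q. p \<in> range ?a \<and> q \<in> range ?a \<and> p < q \<and> q < x \<and> p + x = 2*q"
      using SB.greedy x Bi(4) by simp
  qed
  interpret T: setting ?a lam l k c
    by (rule setting.intro[OF sm a0 S.three_free_range G eqs assms(7) assms(8) assms(9)])
  define f where "f i = nat (T.b i)" for i
  have fb: "int (f i) = T.b i" for i unfolding f_def using T.b_nonneg by simp
  have fsm: "strict_mono f" unfolding strict_mono_def
  proof (intro allI impI)
    fix i j :: nat assume "i < j"
    then have "T.b i < T.b j" using T.b_sm by (simp add: strict_mono_less)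
    then have "int (f i) < int (f j)" using fb by simp
    then show "f i < f j" by simp
  qed
  have Ak: "Ak_set A k c = f ` {..<2^Suc k}"
  proof (rule set_eqI, rule iffI)
    fix x assume "x \<in> Ak_set A k c"
    then consider i where "i < 2^k" "x = ?a i"
      | i where "2^k \<le> i" "i < 2^(k+1)" "x = nat (c + int (?a i))"
      unfolding Ak_set_def by blast
    then show "x \<in> f ` {..<2^Suc k}"
    proof cases
      case 1
      then have "f i = x" unfolding f_def using T.b_low by simp
      moreover have "i < 2^Suc k" using 1 by simp
      ultimately show ?thesis by blast
    next
      case 2
      then have "f i = x" unfolding f_def using T.b_mid[of i] by (simp add: add.commute)
      moreover have "i < 2^Suc k" using 2 by simp
      ultimately show ?thesis by blast
    qed
  next
    fix x assume "x \<in> f ` {..<2^Suc k}"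
    then obtain i where i: "i < 2^Suc k" "x = f i" by blast
    show "x \<in> Ak_set A k c"
    proof (cases "i < 2^k")
      case True
      then have "x = ?a i" using i T.b_low unfolding f_def by simp
      then show ?thesis unfolding Ak_set_def using True by blast
    next
      case False
      then have "x = nat (c + int (?a i))" using i T.b_mid[of i] unfolding f_def by (simp add: add.commute)
      then show ?thesis unfolding Ak_set_def using False i by auto
    qed
  qed
  have tff: "three_free (range f)"
    unfolding three_free_def
  proof (intro ballI impI)
    fix x y z assume xyz: "x \<in> range f" "y \<in> range f" "z \<in> range f" "x < y" "y < z"
    show "x + z \<noteq> 2 * y"
    proof
      assume e: "x + z = 2 * y"
      have rb: "int v \<in> range T.b" if "v \<in> range f" for v
      proof -
        from that obtain i where "v = f i" by blast
        then have "int v = T.b i" using fb by simp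
        then show ?thesis by simp
      qed
      have "int x \<in> range T.b" "int y \<in> range T.b" "int z \<in> range T.b"
        using rb xyz by auto
      moreover have "int x + int z = 2 * int y" using e by linarith
      ultimately have "int x = int z" using T.tfi_range T.tfiD by blast
      then show False using xyz by simp
    qed
  qed
  have finI: "finite (Ak_set A k c)" using Ak by simp
  have cardI: "card (Ak_set A k c) = 2^Suc k"
    using Ak card_image strict_mono_imp_inj_on[OF fsm] by (simp add: card_image)
  have sortI: "sorted_list_of_set (Ak_set A k c) = map f [0..<2^Suc k]"
    using Ak sorted_image_upto[OF fsm] by simp
  have stf: "stanley (Ak_set A k c) = f"
  proof (rule stanley_char[OF finI])
    show "0 < card (Ak_set A k c)" using cardI by simp
    show "strict_mono f" by (rule fsm)
    show "\<forall>i<card (Ak_set A k c). f i = sorted_list_of_set (Ak_set A k c) ! i"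
      using cardI sortI by simp
    show "three_free (range f)" by (rule tff)
    show "\<forall>x. f (card (Ak_set A k c) - 1) < x \<longrightarrow> x \<notin> range f \<longrightarrow>
        (\<exists>p q. p \<in> range f \<and> q \<in> range f \<and> p < q \<and> q < x \<and> p + x = 2 * q)"
    proof (intro allI impI)
      fix x assume x: "f (card (Ak_set A k c) - 1) < x" "x \<notin> range f"
      have "int (f (2^Suc k - 1)) < int x" using x(1) cardI by simp
      then have "T.mB (Suc k) < int x" using fb unfolding T.mB_def by simp
      moreover have "int x \<notin> range T.b"
      proof
        assume "int x \<in> range T.b"
        then obtain i where "int x = T.b i" by blast
        then have "int x = int (f i)" using fb by simp
        then have "x = f i" by simp
        then show False using x by simp
      qed
      ultimately obtain y w where yw: "y \<in> range T.b" "w \<in> range T.b" "w < y" "int x = 2*y - w"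
        using T.cover_final by blast
      obtain i j where ij: "y = T.b i" "w = T.b j" using yw by blast
      have fi: "int (f i) = y" "int (f j) = w" using ij fb by auto
      have "int (f j) < int (f i)" using fi yw by simp
      then have "f j < f i" by simp
      moreover have "int (f i) < int x" using fi yw by simp
      then have "f i < x" by simp
      moreover have "int (f j + x) = int (2 * f i)" using fi yw by simp
      then have "f j + x = 2 * f i" by (simp only: of_nat_eq_iff)
      ultimately show "\<exists>p q. p \<in> range f \<and> q \<in> range f \<and> p < q \<and> q < x \<and> p + x = 2 * q"
        by blast
    qed
  qed
  have "Ak_set A k c \<subseteq> range f" using Ak by auto
  then have tfA: "three_free (Ak_set A k c)" by (rule three_free_subset[OF tff])
  have reg: "regular_with_core f ?a"
    unfolding regular_with_core_def
  proof (intro exI conjI)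
    show "independent ?a lam" by (rule assms(4))
    show "\<forall>K\<ge>Suc k. \<forall>i<2 ^ K.
       f (nat (2 ^ K - 0) + i) = f (nat (2 ^ K - 0)) + ?a i \<and>
       int (f (nat (2 ^ K - 0))) = 2 * int (f (nat (2 ^ K - 0 - 1))) - lam + 1"
    proof (intro allI impI conjI)
      fix K i :: nat assume K: "Suc k \<le> K" and i: "i < 2^K"
      have n1: "nat ((2::int) ^ K - 0) = 2^K" by (simp add: nat_power_eq)
      have n2: "nat ((2::int) ^ K - 0 - 1) = 2^K - 1" by (simp add: nat_diff_distrib nat_power_eq)
      have kK: "k \<le> K" using K by simp
      have "T.b (2^K + i) = T.b (2^K) + int (?a i)" using T.b_high[OF kK i] T.b_pow[OF kK] by simp
      then show "f (nat (2 ^ K - 0) + i) = f (nat (2 ^ K - 0)) + ?a i"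
      proof -
        have "int (f (2^K + i)) = int (f (2^K) + ?a i)" using fb \<open>T.b (2^K + i) = T.b (2^K) + int (?a i)\<close> by simp
        then show ?thesis unfolding n1 by (simp only: of_nat_eq_iff)
      qed
      obtain K' where K': "K = Suc K'" "k \<le> K'" using K by (metis Suc_le_D Suc_le_mono)
      have "T.b (2^K) = 2 * T.b (2^K - 1) + 1 - lam"
        using T.b_pow[OF kK] T.D_Suc[OF K'(2)] K' unfolding T.mB_def by simp
      then show "int (f (nat (2 ^ K - 0))) = 2 * int (f (nat (2 ^ K - 0 - 1))) - lam + 1"
        unfolding n1 n2 fb by simp
    qed
  qed
  show ?thesis using tfA reg stf by simp
qed

end
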